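(* Assume the setting below, and assume that the Agent's recursion (for the contracts under consideration) and the Principal's recursion admit solutions with all essential suprema attained at each $t\in\mathbb{T}$. Then the Principal's optimal utility at time $0$ (over all incentive-compatible and individually rational contracts) equals $W_0-R+h_0$. Moreover, letting $(\beta_t,A_t,\Gamma_{t+1})_{t\in\mathbb{T}}$ be maximizers attaining $h_t$ in the Principal's recursion and defining $$\Theta:=\sum_{0\le t<T}\big[\Gamma_{t+1}-U^a_t(\Gamma_{t+1})+c_t(A_t)\big],$$ the contract $S(\bar A):=R+\Theta+\sum_{t<T}\beta_t\big[\Delta W^{\bar A}_{t+1}-A_t\Delta\tilde P_{t+1}\big]$ is optimal for the Principal among incentive-compatible and individually rational contracts; under $S$ the Agent's optimal effort is $A=(A_t)$ and his optimal time-$0$ utility equals $R$.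
   Context: Fix $T\in\mathbb{N}$, $\mathbb{T}:=\{0,\dots,T-1\}$, a probability space carrying an $\mathbb{R}^N$-valued strictly positive price process $P=(P_t)_{t=0}^T$ with generated filtration $(\mathcal{F}_t)$ and $\mathbb{E}[P_{t+1}\mid\mathcal{F}_t]$ a.s. finite. $\Delta\tilde P_{t+1}:=diag(P_t)^{-1}(P_{t+1}-P_t)$. All (in)equalities are a.s.; $L^0(\mathcal{G})$ denotes a.s. finite $\mathcal{G}$-measurable random variables, $\underline L^0(\mathcal{G})$ those with values in $\mathbb{R}\cup\{-\infty\}$. For vectors, $xy$ is the Euclidean inner product. Efforts: $A=(A_t)_{t\in\mathbb{T}}$ with $A_t\in L^0(\mathcal{F}_t)^N$; cost $c_t:\mathbb{R}^N\to\mathbb{R}$ strictly convex (applied pointwise); wealth $W^A_t=W_0+\sum_{s<t}A_s\Delta\tilde P_{s+1}$, $W_0\in\mathbb{R}$, $\Delta W^A_{t+1}=A_t\Delta\tilde P_{t+1}$. Preferences: Agent $U^a=(U^a_t)$ and Principal $U^p=(U^p_t)$, $U^l_t:L^0(\mathcal{F}_T)\to\underline L^0(\mathcal{F}_t)$, each satisfying the usual conditions: normalized ($U_t(0)=0$), proper, monotone, $\mathcal{F}_t$-conditionally concave, $\mathcal{F}_t$-translation invariant ($U_t(X+Y)=U_t(X)+Y$ for $Y\in L^0(\mathcal{F}_t)$) and time consistent ($U_{t+1}(X)\ge U_{t+1}(Y)\Rightarrow U_t(X)\ge U_t(Y)$). Contracts: a pair $(\Theta,\beta)$ with $\Theta$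 $\mathcal{F}_T$-measurable and $\beta=(\beta_t)$, $\beta_t\in L^0(\mathcal{F}_t)$; it pays $S(A)=\Theta+\sum_{t<T}\beta_t\Delta W^A_{t+1}$ to the Agent when he chooses effort $A$. The Agent's time-0 utility is $U^a_0(S(A)-\sum_t c_t(A_t))$; the Principal's is $U^p_0(W^A_T-S(A))$ with $A$ the Agent's optimal effort. Agent's recursion: $H_T=\Theta$, $H_t=\operatorname*{ess\,sup}_{A\in L^0(\mathcal{F}_t)^N}\{U^a_t(H_{t+1}+\beta_tA\Delta\tilde P_{t+1})-c_t(A)\}$. The contract is individually rational if the Agent's optimal time-0 utility is at least the reservation utility $R\in\mathbb{R}$, and incentive compatible if all essential suprema in the Agent's recursion are attained. Incentive set: for $\beta\in L^0(\mathcal{F}_t)$, $\mathbb{C}_t(\beta)$ is the set of $(A,\Gamma)\in L^0(\mathcal{F}_t)^N\times L^0(\mathcal{F}_{t+1})$ such that for all $\bar A\in L^0(\mathcal{F}_t)^N$: $U^a_t(\Gamma)-c_t(A)\ge U^a_t(\Gamma+\beta(\bar A-A)\Delta\tilde P_{t+1})-c_t(\bar A)$. Principal's recursion: $h_T=0$, $h_t=\operatorname*{ess\,sup}\{U^a_t(\Gamma)-c_t(A)+U^p_t(h_{t+1}+A\Delta\tilde P_{t+1}-\Gamma)\}$, the supremum over $\beta\in L^0(\mathcal{F}_t)$ and $(A,\Gamma)\in\mathbb{C}_t(\beta)$. *)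

theory Defs
  imports "HOL-Probability.Probability"
begin

definition Fil :: "'w measure \<Rightarrow> (nat \<Rightarrow> 'w \<Rightarrow> real^'n) \<Rightarrow> nat \<Rightarrow> 'w measure" where
  "Fil M P t = sigma (space M) {P s -` B \<inter> space M | s B. s \<le> t \<and> B \<in> sets borel}"

definition dPt :: "(nat \<Rightarrow> 'w \<Rightarrow> real^'n) \<Rightarrow> nat \<Rightarrow> 'w \<Rightarrow> real^'n" where
  "dPt P t \<omega> = (\<chi> i. (P (Suc t) \<omega> $ i - P t \<omega> $ i) / P t \<omega> $ i)"

definition wealth :: "real \<Rightarrow> (nat \<Rightarrow> 'w \<Rightarrow> real^'n) \<Rightarrow> (nat \<Rightarrow> 'w \<Rightarrow> real^'n) \<Rightarrow> nat \<Rightarrow> 'w \<Rightarrow> real" where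
  "wealth W0 P A t \<omega> = W0 + (\<Sum>s<t. A s \<omega> \<bullet> dPt P s \<omega>)"

definition strictly_convex :: "(real^'n \<Rightarrow> real) \<Rightarrow> bool" where
  "strictly_convex f \<longleftrightarrow>
     (\<forall>x y u. x \<noteq> y \<longrightarrow> 0 < u \<longrightarrow> u < 1 \<longrightarrow>
        f (u *\<^sub>R x + (1 - u) *\<^sub>R y) < u * f x + (1 - u) * f y)"

text \<open>A real-valued F-measurable function is an element of L0(F); an ereal-valued F-measurable
  function that is a.s. not +infinity is an element of underline L0(F).\<close>

definition cond_util ::
  "'w measure \<Rightarrow> (nat \<Rightarrow> 'w \<Rightarrow> real^'n) \<Rightarrow> nat \<Rightarrow> (nat \<Rightarrow> ('w \<Rightarrow> real) \<Rightarrow> 'w \<Rightarrow> ereal) \<Rightarrow> bool" where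
  "cond_util M P T U \<longleftrightarrow>
    \<comment> \<open>maps L0(F_T) into underline L0(F_t)\<close>
    (\<forall>t\<le>T. \<forall>X\<in>borel_measurable (Fil M P T).
        U t X \<in> borel_measurable (Fil M P t) \<and> (AE \<omega> in M. U t X \<omega> \<noteq> \<infinity>))
    \<comment> \<open>normalized\<close>
  \<and> (\<forall>t\<le>T. AE \<omega> in M. U t (\<lambda>_. 0) \<omega> = 0)
    \<comment> \<open>proper (values below +infinity, and the domain is non-empty)\<close>
  \<and> (\<forall>t\<le>T. \<exists>X\<in>borel_measurable (Fil M P T). AE \<omega> in M. U t X \<omega> \<noteq> - \<infinity>)
    \<comment> \<open>monotone\<close>
  \<and> (\<forall>t\<le>T. \<forall>X\<in>borel_measurable (Fil M P T). \<forall>Y\<in>borel_measurable (Fil M P T).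
        (AE \<omega> in M. X \<omega> \<le> Y \<omega>) \<longrightarrow> (AE \<omega> in M. U t X \<omega> \<le> U t Y \<omega>))
    \<comment> \<open>F_t-conditionally concave\<close>
  \<and> (\<forall>t\<le>T. \<forall>X\<in>borel_measurable (Fil M P T). \<forall>Y\<in>borel_measurable (Fil M P T).
        \<forall>l\<in>borel_measurable (Fil M P t).
        (AE \<omega> in M. 0 \<le> l \<omega> \<and> l \<omega> \<le> 1) \<longrightarrow>
        (AE \<omega> in M. ereal (l \<omega>) * U t X \<omega> + ereal (1 - l \<omega>) * U t Y \<omega>
                      \<le> U t (\<lambda>\<omega>. l \<omega> * X \<omega> + (1 - l \<omega>) * Y \<omega>) \<omega>))
    \<comment> \<open>F_t-translation invariant\<close>
  \<and> (\<forall>t\<le>T. \<forall>X\<in>borel_measurable (Fil M P T). \<forall>Y\<in>borel_measurable (Fil M P t).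
        AE \<omega> in M. U t (\<lambda>\<omega>. X \<omega> + Y \<omega>) \<omega> = U t X \<omega> + ereal (Y \<omega>))
    \<comment> \<open>time consistent\<close>
  \<and> (\<forall>t<T. \<forall>X\<in>borel_measurable (Fil M P T). \<forall>Y\<in>borel_measurable (Fil M P T).
        (AE \<omega> in M. U (Suc t) X \<omega> \<ge> U (Suc t) Y \<omega>) \<longrightarrow> (AE \<omega> in M. U t X \<omega> \<ge> U t Y \<omega>))"

definition is_esssup :: "'w measure \<Rightarrow> 'w measure \<Rightarrow> ('w \<Rightarrow> ereal) set \<Rightarrow> ('w \<Rightarrow> ereal) \<Rightarrow> bool" where
  "is_esssup M G Fam X \<longleftrightarrow>
     X \<in> borel_measurable G
   \<and> (\<forall>f\<in>Fam. AE \<omega> in M. f \<omega> \<le> X \<omega>)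
   \<and> (\<forall>Y\<in>borel_measurable G. (\<forall>f\<in>Fam. AE \<omega> in M. f \<omega> \<le> Y \<omega>) \<longrightarrow> (AE \<omega> in M. X \<omega> \<le> Y \<omega>))"

definition pay :: "(nat \<Rightarrow> 'w \<Rightarrow> real^'n) \<Rightarrow> nat \<Rightarrow> ('w \<Rightarrow> real) \<Rightarrow> (nat \<Rightarrow> 'w \<Rightarrow> real)
                   \<Rightarrow> (nat \<Rightarrow> 'w \<Rightarrow> real^'n) \<Rightarrow> 'w \<Rightarrow> real" where
  "pay P T Theta beta A \<omega> = Theta \<omega> + (\<Sum>t<T. beta t \<omega> * (A t \<omega> \<bullet> dPt P t \<omega>))"

definition is_contract :: "'w measure \<Rightarrow> (nat \<Rightarrow> 'w \<Rightarrow> real^'n) \<Rightarrow> nat \<Rightarrow> ('w \<Rightarrow> real)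
                           \<Rightarrow> (nat \<Rightarrow> 'w \<Rightarrow> real) \<Rightarrow> bool" where
  "is_contract M P T Theta beta \<longleftrightarrow>
     Theta \<in> borel_measurable (Fil M P T) \<and> (\<forall>t<T. beta t \<in> borel_measurable (Fil M P t))"

definition agent_obj :: "(nat \<Rightarrow> 'w \<Rightarrow> real^'n) \<Rightarrow> (nat \<Rightarrow> ('w \<Rightarrow> real) \<Rightarrow> 'w \<Rightarrow> ereal)
      \<Rightarrow> (nat \<Rightarrow> real^'n \<Rightarrow> real) \<Rightarrow> nat \<Rightarrow> ('w \<Rightarrow> real) \<Rightarrow> ('w \<Rightarrow> real) \<Rightarrow> ('w \<Rightarrow> real^'n) \<Rightarrow> 'w \<Rightarrow> ereal" where
  "agent_obj P Ua c t Hn b a \<omega> =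
     Ua t (\<lambda>\<omega>. Hn \<omega> + b \<omega> * (a \<omega> \<bullet> dPt P t \<omega>)) \<omega> - ereal (c t (a \<omega>))"

definition agent_sol :: "'w measure \<Rightarrow> (nat \<Rightarrow> 'w \<Rightarrow> real^'n) \<Rightarrow> nat
      \<Rightarrow> (nat \<Rightarrow> ('w \<Rightarrow> real) \<Rightarrow> 'w \<Rightarrow> ereal) \<Rightarrow> (nat \<Rightarrow> real^'n \<Rightarrow> real)
      \<Rightarrow> ('w \<Rightarrow> real) \<Rightarrow> (nat \<Rightarrow> 'w \<Rightarrow> real) \<Rightarrow> (nat \<Rightarrow> 'w \<Rightarrow> real) \<Rightarrow> bool" where
  "agent_sol M P T Ua c Theta beta H \<longleftrightarrow>
     (\<forall>t\<le>T. H t \<in> borel_measurable (Fil M P t))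
   \<and> (AE \<omega> in M. H T \<omega> = Theta \<omega>)
   \<and> (\<forall>t<T. is_esssup M (Fil M P t)
              {agent_obj P Ua c t (H (Suc t)) (beta t) a | a. a \<in> borel_measurable (Fil M P t)}
              (\<lambda>\<omega>. ereal (H t \<omega>)))"

definition agent_opt_effort :: "'w measure \<Rightarrow> (nat \<Rightarrow> 'w \<Rightarrow> real^'n) \<Rightarrow> nat
      \<Rightarrow> (nat \<Rightarrow> ('w \<Rightarrow> real) \<Rightarrow> 'w \<Rightarrow> ereal) \<Rightarrow> (nat \<Rightarrow> real^'n \<Rightarrow> real)
      \<Rightarrow> (nat \<Rightarrow> 'w \<Rightarrow> real) \<Rightarrow> (nat \<Rightarrow> 'w \<Rightarrow> real) \<Rightarrow> (nat \<Rightarrow> 'w \<Rightarrow> real^'n) \<Rightarrow> bool" where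
  "agent_opt_effort M P T Ua c beta H A \<longleftrightarrow>
     (\<forall>t<T. A t \<in> borel_measurable (Fil M P t)
          \<and> (AE \<omega> in M. agent_obj P Ua c t (H (Suc t)) (beta t) (A t) \<omega> = ereal (H t \<omega>)))"

definition incentive_compatible :: "'w measure \<Rightarrow> (nat \<Rightarrow> 'w \<Rightarrow> real^'n) \<Rightarrow> nat
      \<Rightarrow> (nat \<Rightarrow> ('w \<Rightarrow> real) \<Rightarrow> 'w \<Rightarrow> ereal) \<Rightarrow> (nat \<Rightarrow> real^'n \<Rightarrow> real)
      \<Rightarrow> ('w \<Rightarrow> real) \<Rightarrow> (nat \<Rightarrow> 'w \<Rightarrow> real) \<Rightarrow> bool" where
  "incentive_compatible M P T Ua c Theta beta \<longleftrightarrow>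
     (\<exists>H A. agent_sol M P T Ua c Theta beta H \<and> agent_opt_effort M P T Ua c beta H A)"

definition individually_rational :: "'w measure \<Rightarrow> real \<Rightarrow> (nat \<Rightarrow> 'w \<Rightarrow> real) \<Rightarrow> bool" where
  "individually_rational M R H \<longleftrightarrow> (AE \<omega> in M. R \<le> H 0 \<omega>)"

definition in_incentive_set :: "'w measure \<Rightarrow> (nat \<Rightarrow> 'w \<Rightarrow> real^'n)
      \<Rightarrow> (nat \<Rightarrow> ('w \<Rightarrow> real) \<Rightarrow> 'w \<Rightarrow> ereal) \<Rightarrow> (nat \<Rightarrow> real^'n \<Rightarrow> real)
      \<Rightarrow> nat \<Rightarrow> ('w \<Rightarrow> real) \<Rightarrow> ('w \<Rightarrow> real^'n) \<Rightarrow> ('w \<Rightarrow> real) \<Rightarrow> bool" where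
  "in_incentive_set M P Ua c t b a Gam \<longleftrightarrow>
     a \<in> borel_measurable (Fil M P t) \<and> Gam \<in> borel_measurable (Fil M P (Suc t))
   \<and> (\<forall>a'\<in>borel_measurable (Fil M P t). AE \<omega> in M.
        Ua t Gam \<omega> - ereal (c t (a \<omega>))
          \<ge> Ua t (\<lambda>\<omega>. Gam \<omega> + b \<omega> * ((a' \<omega> - a \<omega>) \<bullet> dPt P t \<omega>)) \<omega> - ereal (c t (a' \<omega>)))"

definition principal_obj :: "(nat \<Rightarrow> 'w \<Rightarrow> real^'n)
      \<Rightarrow> (nat \<Rightarrow> ('w \<Rightarrow> real) \<Rightarrow> 'w \<Rightarrow> ereal) \<Rightarrow> (nat \<Rightarrow> ('w \<Rightarrow> real) \<Rightarrow> 'w \<Rightarrow> ereal)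
      \<Rightarrow> (nat \<Rightarrow> real^'n \<Rightarrow> real) \<Rightarrow> nat \<Rightarrow> ('w \<Rightarrow> real) \<Rightarrow> ('w \<Rightarrow> real^'n) \<Rightarrow> ('w \<Rightarrow> real)
      \<Rightarrow> 'w \<Rightarrow> ereal" where
  "principal_obj P Ua Up c t hn a Gam \<omega> =
     Ua t Gam \<omega> - ereal (c t (a \<omega>)) + Up t (\<lambda>\<omega>. hn \<omega> + a \<omega> \<bullet> dPt P t \<omega> - Gam \<omega>) \<omega>"

definition principal_sol :: "'w measure \<Rightarrow> (nat \<Rightarrow> 'w \<Rightarrow> real^'n) \<Rightarrow> nat
      \<Rightarrow> (nat \<Rightarrow> ('w \<Rightarrow> real) \<Rightarrow> 'w \<Rightarrow> ereal) \<Rightarrow> (nat \<Rightarrow> ('w \<Rightarrow> real) \<Rightarrow> 'w \<Rightarrow> ereal)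
      \<Rightarrow> (nat \<Rightarrow> real^'n \<Rightarrow> real) \<Rightarrow> (nat \<Rightarrow> 'w \<Rightarrow> real) \<Rightarrow> bool" where
  "principal_sol M P T Ua Up c h \<longleftrightarrow>
     (\<forall>t\<le>T. h t \<in> borel_measurable (Fil M P t))
   \<and> (AE \<omega> in M. h T \<omega> = 0)
   \<and> (\<forall>t<T. is_esssup M (Fil M P t)
              {principal_obj P Ua Up c t (h (Suc t)) a Gam | b a Gam.
                  b \<in> borel_measurable (Fil M P t) \<and> in_incentive_set M P Ua c t b a Gam}
              (\<lambda>\<omega>. ereal (h t \<omega>)))"

end

theory Submission
  imports Defs
begin


lemma Fil_space[simp]: "space (Fil M P t) = space M"
  unfolding Fil_def by (rule space_measure_of) auto

lemma Fil_sets: "sets (Fil M P t) = sigma_sets (space M) {P s -` B \<inter> space M | s B. s \<le> t \<and> B \<in> sets borel}"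
  unfolding Fil_def by (rule sets_measure_of) auto

lemma Fil_mono_meas:
  assumes "s \<le> t" "f \<in> measurable (Fil M P s) N"
  shows "f \<in> measurable (Fil M P t) N"
proof -
  have "sets (Fil M P s) \<subseteq> sets (Fil M P t)"
    unfolding Fil_sets apply (intro sigma_sets_mono') using assms(1) order_trans by blast
  then show ?thesis using assms(2) unfolding measurable_def by auto
qed

lemma Fil_P_meas:
  fixes P :: "nat \<Rightarrow> 'w \<Rightarrow> real^'n"
  assumes "s \<le> t" shows "P s \<in> borel_measurable (Fil M P t)"
proof (rule measurableI)
  fix B :: "(real^'n) set" assume "B \<in> sets borel"
  then show "P s -` B \<inter> space (Fil M P t) \<in> sets (Fil M P t)"
    unfolding Fil_sets using assms by (auto intro: sigma_sets.Basic)
qed auto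



lemma inner_dPt_meas:
  fixes P :: "nat \<Rightarrow> 'w \<Rightarrow> real^'n" and a :: "'w \<Rightarrow> real^'n"
  assumes "a \<in> borel_measurable N" "P t \<in> borel_measurable N" "P (Suc t) \<in> borel_measurable N"
  shows "(\<lambda>\<omega>. a \<omega> \<bullet> dPt P t \<omega>) \<in> borel_measurable N"
  unfolding inner_vec_def dPt_def vec_lambda_beta inner_real_def
  by (intro borel_measurable_sum borel_measurable_times borel_measurable_divide borel_measurable_diff
        measurable_compose[OF _ borel_measurable_nth] assms)

lemma conv_cont:
  fixes f :: "real^'n \<Rightarrow> real"
  assumes "strictly_convex f" shows "continuous_on UNIV f"
proof (rule convex_on_continuous)
  show "convex_on UNIV f"
  proof (rule convex_onI)
    fix t :: real and x y :: "real^'n" assume t: "0 < t" "t < 1"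
    show "f ((1 - t) *\<^sub>R x + t *\<^sub>R y) \<le> (1 - t) * f x + t * f y"
    proof (cases "x = y")
      case True
      have "(1 - t) *\<^sub>R x + t *\<^sub>R x = x" by (simp add: scaleR_left_diff_distrib)
      then show ?thesis using True by (simp add: algebra_simps)
    next
      case False
      have "f ((1 - t) *\<^sub>R x + (1 - (1 - t)) *\<^sub>R y) < (1 - t) * f x + (1 - (1 - t)) * f y"
        by (rule assms[unfolded strictly_convex_def, rule_format, OF False]) (use t in auto)
      then show ?thesis by simp
    qed
  qed simp
qed simp




lemma cu_meas: assumes "cond_util M P T U" "t \<le> T" "X \<in> borel_measurable (Fil M P T)"
  shows "U t X \<in> borel_measurable (Fil M P t)"
  using assms(1)[unfolded cond_util_def, THEN conjunct1, rule_format, OF assms(2,3)] by (rule conjunct1)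
lemma cu_fin: assumes "cond_util M P T U" "t \<le> T" "X \<in> borel_measurable (Fil M P T)"
  shows "AE \<omega> in M. U t X \<omega> \<noteq> \<infinity>"
  using assms(1)[unfolded cond_util_def, THEN conjunct1, rule_format, OF assms(2,3)] by (rule conjunct2)
lemma cu_norm: assumes "cond_util M P T U" "t \<le> T"
  shows "AE \<omega> in M. U t (\<lambda>_. 0) \<omega> = 0"
  using assms(1)[unfolded cond_util_def, THEN conjunct2, THEN conjunct1, rule_format, OF assms(2)] .
lemma cu_mono: assumes "cond_util M P T U" "t \<le> T" "X \<in> borel_measurable (Fil M P T)" "Y \<in> borel_measurable (Fil M P T)"
  "AE \<omega> in M. X \<omega> \<le> Y \<omega>" shows "AE \<omega> in M. U t X \<omega> \<le> U t Y \<omega>"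
  using assms(1)[unfolded cond_util_def, THEN conjunct2, THEN conjunct2, THEN conjunct2, THEN conjunct1, rule_format, OF assms(2,3,4,5)] .
lemma cu_trans: assumes "cond_util M P T U" "t \<le> T" "X \<in> borel_measurable (Fil M P T)" "Y \<in> borel_measurable (Fil M P t)"
  shows "AE \<omega> in M. U t (\<lambda>\<omega>. X \<omega> + Y \<omega>) \<omega> = U t X \<omega> + ereal (Y \<omega>)"
  using assms(1)[unfolded cond_util_def, THEN conjunct2, THEN conjunct2, THEN conjunct2, THEN conjunct2, THEN conjunct2, THEN conjunct1, rule_format, OF assms(2,3,4)] .
lemma cu_tc: assumes "cond_util M P T U" "t < T" "X \<in> borel_measurable (Fil M P T)" "Y \<in> borel_measurable (Fil M P T)"
  "AE \<omega> in M. U (Suc t) X \<omega> \<le> U (Suc t) Y \<omega>" shows "AE \<omega> in M. U t X \<omega> \<le> U t Y \<omega>"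
  using assms(1)[unfolded cond_util_def, THEN conjunct2, THEN conjunct2, THEN conjunct2, THEN conjunct2, THEN conjunct2, THEN conjunct2, rule_format, OF assms(2,4,3,5)] .
lemma cu_cong: assumes a: "cond_util M P T U" "t \<le> T" "X \<in> borel_measurable (Fil M P T)" "Y \<in> borel_measurable (Fil M P T)"
    "AE \<omega> in M. X \<omega> = Y \<omega>"
  shows "AE \<omega> in M. U t X \<omega> = U t Y \<omega>"
proof -
  have "AE \<omega> in M. U t X \<omega> \<le> U t Y \<omega>" by (rule cu_mono[OF a(1-4)]) (use a(5) in auto)
  moreover have "AE \<omega> in M. U t Y \<omega> \<le> U t X \<omega>" by (rule cu_mono[OF a(1,2,4,3)]) (use a(5) in auto)
  ultimately show ?thesis by eventually_elim auto
qed
lemma cu_self: assumes a: "cond_util M P T U" "t \<le> T" "Y \<in> borel_measurable (Fil M P t)"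
  shows "AE \<omega> in M. U t Y \<omega> = ereal (Y \<omega>)"
proof -
  have "AE \<omega> in M. U t (\<lambda>\<omega>. (\<lambda>_. 0) \<omega> + Y \<omega>) \<omega> = U t (\<lambda>_. 0) \<omega> + ereal (Y \<omega>)"
    by (rule cu_trans[OF a(1,2) _ a(3)]) simp
  moreover have "AE \<omega> in M. U t (\<lambda>_. 0) \<omega> = 0" by (rule cu_norm[OF a(1,2)])
  ultimately show ?thesis by eventually_elim simp
qed

lemma esssup_ub: "is_esssup M G F X \<Longrightarrow> f \<in> F \<Longrightarrow> AE \<omega> in M. f \<omega> \<le> X \<omega>"
  unfolding is_esssup_def by blast
lemma esssup_le: "is_esssup M G F X \<Longrightarrow> Y \<in> borel_measurable G \<Longrightarrow> (\<And>f. f \<in> F \<Longrightarrow> AE \<omega> in M. f \<omega> \<le> Y \<omega>)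
   \<Longrightarrow> AE \<omega> in M. X \<omega> \<le> Y \<omega>"
  unfolding is_esssup_def by blast

lemma ereal_aux: "ereal a + q \<le> ereal b \<Longrightarrow> q + ereal z \<le> ereal (z - a + b)"
  by (cases q) auto


lemma term_meas:
  fixes P :: "nat \<Rightarrow> 'w \<Rightarrow> real^'n" and a :: "'w \<Rightarrow> real^'n"
  assumes "a \<in> borel_measurable (Fil M P s)" "s < t"
  shows "(\<lambda>\<omega>. a \<omega> \<bullet> dPt P s \<omega>) \<in> borel_measurable (Fil M P t)"
proof (rule inner_dPt_meas)
  show "a \<in> borel_measurable (Fil M P t)" by (rule Fil_mono_meas[OF _ assms(1)]) (use assms(2) in simp)
  show "P s \<in> borel_measurable (Fil M P t)" by (rule Fil_P_meas) (use assms(2) in simp)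
  show "P (Suc s) \<in> borel_measurable (Fil M P t)" by (rule Fil_P_meas) (use assms(2) in simp)
qed

lemma part1:
  fixes P :: "nat \<Rightarrow> 'w \<Rightarrow> real^'n"
  assumes Up: "cond_util M P T Up" and hsol: "principal_sol M P T Ua Up c h"
    and ctr: "is_contract M P T Th b" and asol: "agent_sol M P T Ua c Th b H"
    and aopt: "agent_opt_effort M P T Ua c b H A'" and ir: "individually_rational M R H"
  shows "AE \<omega> in M. Up 0 (\<lambda>\<omega>. wealth W0 P A' T \<omega> - pay P T Th b A' \<omega>) \<omega> \<le> ereal (W0 - R + h 0 \<omega>)"
proof -
  define X where "X = (\<lambda>\<omega>. wealth W0 P A' T \<omega> - pay P T Th b A' \<omega>)"
  define Z where "Z = (\<lambda>t \<omega>. W0 + (\<Sum>s<t. A' s \<omega> \<bullet> dPt P s \<omega> - b s \<omega> * (A' s \<omega> \<bullet> dPt P s \<omega>)))"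
  have Am: "\<And>s. s < T \<Longrightarrow> A' s \<in> borel_measurable (Fil M P s)" using aopt unfolding agent_opt_effort_def by blast
  have bm: "\<And>s. s < T \<Longrightarrow> b s \<in> borel_measurable (Fil M P s)" using ctr unfolding is_contract_def by blast
  have Thm: "Th \<in> borel_measurable (Fil M P T)" using ctr unfolding is_contract_def by blast
  have Hm: "\<And>s. s \<le> T \<Longrightarrow> H s \<in> borel_measurable (Fil M P s)" using asol unfolding agent_sol_def by blast
  have hm: "\<And>s. s \<le> T \<Longrightarrow> h s \<in> borel_measurable (Fil M P s)" using hsol unfolding principal_sol_def by blast
  have tm: "(\<lambda>\<omega>. A' s \<omega> \<bullet> dPt P s \<omega>) \<in> borel_measurable (Fil M P t)" if "s < t" "t \<le> T" for s t
    by (rule term_meas[OF Am]) (use that in auto)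
  have btm: "\<And>s t. s < t \<Longrightarrow> t \<le> T \<Longrightarrow> (\<lambda>\<omega>. b s \<omega> * (A' s \<omega> \<bullet> dPt P s \<omega>)) \<in> borel_measurable (Fil M P t)"
  proof -
    fix s t :: nat assume st: "s < t" "t \<le> T"
    have "b s \<in> borel_measurable (Fil M P t)" using Fil_mono_meas[OF _ bm[of s]] st by simp
    then show "(\<lambda>\<omega>. b s \<omega> * (A' s \<omega> \<bullet> dPt P s \<omega>)) \<in> borel_measurable (Fil M P t)"
      using tm[OF st] by (rule borel_measurable_times)
  qed
  have Zm: "\<And>t. t \<le> T \<Longrightarrow> Z t \<in> borel_measurable (Fil M P t)"
    unfolding Z_def by (intro borel_measurable_add borel_measurable_const borel_measurable_sum
      borel_measurable_diff tm btm) auto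
  have Xm: "X \<in> borel_measurable (Fil M P T)"
    unfolding X_def wealth_def pay_def by (intro borel_measurable_add borel_measurable_const borel_measurable_sum
      borel_measurable_diff tm btm Thm) auto
  have claim: "AE \<omega> in M. Up t X \<omega> \<le> ereal (Z t \<omega> - H t \<omega> + h t \<omega>)" if "t \<le> T" for t
    using that
  proof (induction rule: inc_induct)
    case base
    have "AE \<omega> in M. Up T X \<omega> = ereal (X \<omega>)" by (rule cu_self[OF Up order_refl Xm])
    moreover have "AE \<omega> in M. H T \<omega> = Th \<omega>" using asol unfolding agent_sol_def by blast
    moreover have "AE \<omega> in M. h T \<omega> = 0" using hsol unfolding principal_sol_def by blast
    ultimately show ?case by eventually_elim (simp add: X_def Z_def wealth_def pay_def sum_subtractf)
  next
    case (step n)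
    define G where "G = (\<lambda>\<omega>. H (Suc n) \<omega> + b n \<omega> * (A' n \<omega> \<bullet> dPt P n \<omega>))"
    define Q where "Q = (\<lambda>\<omega>. h (Suc n) \<omega> + A' n \<omega> \<bullet> dPt P n \<omega> - G \<omega>)"
    define Y where "Y = (\<lambda>\<omega>. Z (Suc n) \<omega> - H (Suc n) \<omega> + h (Suc n) \<omega>)"
    have Ym: "Y \<in> borel_measurable (Fil M P (Suc n))"
      unfolding Y_def by (intro borel_measurable_add borel_measurable_diff Zm Hm hm) (use step in auto)
    have YmT: "Y \<in> borel_measurable (Fil M P T)" using Fil_mono_meas[OF _ Ym] step by simp
    have "AE \<omega> in M. Up (Suc n) Y \<omega> = ereal (Y \<omega>)" by (rule cu_self[OF Up _ Ym]) (use step in simp)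
    with step.IH have "AE \<omega> in M. Up (Suc n) X \<omega> \<le> Up (Suc n) Y \<omega>"
      by eventually_elim (simp add: Y_def)
    then have 1: "AE \<omega> in M. Up n X \<omega> \<le> Up n Y \<omega>" by (rule cu_tc[OF Up step(2) Xm YmT])
    have Gm: "G \<in> borel_measurable (Fil M P (Suc n))"
      unfolding G_def by (intro borel_measurable_add Hm btm) (use step in auto)
    have hST: "h (Suc n) \<in> borel_measurable (Fil M P T)"
      using Fil_mono_meas[OF _ hm[of "Suc n"]] step by simp
    have Qm: "Q \<in> borel_measurable (Fil M P T)"
      unfolding Q_def by (intro borel_measurable_add borel_measurable_diff hST tm
        Fil_mono_meas[OF _ Gm]) (use step in auto)
    have Znm: "Z n \<in> borel_measurable (Fil M P n)" using Zm step by simp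
    have Yeq: "Y = (\<lambda>\<omega>. Q \<omega> + Z n \<omega>)" by (auto simp: Y_def Q_def G_def Z_def algebra_simps)
    have 2: "AE \<omega> in M. Up n Y \<omega> = Up n Q \<omega> + ereal (Z n \<omega>)"
      unfolding Yeq by (rule cu_trans[OF Up _ Qm Znm]) (use step in simp)
    have 4: "AE \<omega> in M. Ua n G \<omega> - ereal (c n (A' n \<omega>)) = ereal (H n \<omega>)"
      using aopt step unfolding agent_opt_effort_def agent_obj_def G_def by blast
    have ess_a: "is_esssup M (Fil M P n)
              {agent_obj P Ua c n (H (Suc n)) (b n) a | a. a \<in> borel_measurable (Fil M P n)}
              (\<lambda>\<omega>. ereal (H n \<omega>))" using asol step unfolding agent_sol_def by blast
    have inc: "in_incentive_set M P Ua c n (b n) (A' n) G"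
      unfolding in_incentive_set_def
    proof (intro conjI ballI)
      show "A' n \<in> borel_measurable (Fil M P n)" using Am step by simp
      show "G \<in> borel_measurable (Fil M P (Suc n))" by (rule Gm)
      fix a' :: "'w \<Rightarrow> real^'n" assume a': "a' \<in> borel_measurable (Fil M P n)"
      have eq: "(\<lambda>\<omega>. G \<omega> + b n \<omega> * ((a' \<omega> - A' n \<omega>) \<bullet> dPt P n \<omega>)) = (\<lambda>\<omega>. H (Suc n) \<omega> + b n \<omega> * (a' \<omega> \<bullet> dPt P n \<omega>))"
        by (auto simp: G_def inner_diff_left algebra_simps)
      have "agent_obj P Ua c n (H (Suc n)) (b n) a' \<in> {agent_obj P Ua c n (H (Suc n)) (b n) a | a. a \<in> borel_measurable (Fil M P n)}"
        using a' by blast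
      then have "AE \<omega> in M. agent_obj P Ua c n (H (Suc n)) (b n) a' \<omega> \<le> ereal (H n \<omega>)"
        by (rule esssup_ub[OF ess_a])
      with 4 show "AE \<omega> in M. Ua n G \<omega> - ereal (c n (A' n \<omega>))
          \<ge> Ua n (\<lambda>\<omega>. G \<omega> + b n \<omega> * ((a' \<omega> - A' n \<omega>) \<bullet> dPt P n \<omega>)) \<omega> - ereal (c n (a' \<omega>))"
        unfolding eq agent_obj_def by eventually_elim simp
    qed
    have ess_p: "is_esssup M (Fil M P n)
              {principal_obj P Ua Up c n (h (Suc n)) a Gm | b a Gm.
                  b \<in> borel_measurable (Fil M P n) \<and> in_incentive_set M P Ua c n b a Gm}
              (\<lambda>\<omega>. ereal (h n \<omega>))" using hsol step unfolding principal_sol_def by blast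
    have "principal_obj P Ua Up c n (h (Suc n)) (A' n) G \<in> {principal_obj P Ua Up c n (h (Suc n)) a Gm | b a Gm.
                  b \<in> borel_measurable (Fil M P n) \<and> in_incentive_set M P Ua c n b a Gm}"
      using inc bm[of n] step by blast
    then have "AE \<omega> in M. principal_obj P Ua Up c n (h (Suc n)) (A' n) G \<omega> \<le> ereal (h n \<omega>)"
      by (rule esssup_ub[OF ess_p])
    then have 3: "AE \<omega> in M. Ua n G \<omega> - ereal (c n (A' n \<omega>)) + Up n Q \<omega> \<le> ereal (h n \<omega>)"
      unfolding principal_obj_def Q_def .
    show ?case using 1 2 3 4
    proof eventually_elim
      case (elim \<omega>)
      have "ereal (H n \<omega>) + Up n Q \<omega> \<le> ereal (h n \<omega>)" using elim(3,4) by simp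
      then have "Up n Q \<omega> + ereal (Z n \<omega>) \<le> ereal (Z n \<omega> - H n \<omega> + h n \<omega>)" by (rule ereal_aux)
      then show ?case using elim(1,2) by simp
    qed
  qed
  have "AE \<omega> in M. R \<le> H 0 \<omega>" using ir unfolding individually_rational_def .
  with claim[of 0, OF le0] show ?thesis unfolding X_def[symmetric]
  proof eventually_elim
    case (elim \<omega>)
    have "ereal (Z 0 \<omega> - H 0 \<omega> + h 0 \<omega>) \<le> ereal (W0 - R + h 0 \<omega>)" using elim(2) by (simp add: Z_def)
    with elim(1) show ?case by (rule order_trans)
  qed
qed


lemma part2:
  fixes P :: "nat \<Rightarrow> 'w \<Rightarrow> real^'n" and A :: "nat \<Rightarrow> 'w \<Rightarrow> real^'n"
  assumes cost: "\<forall>t<T. strictly_convex (c t)"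
    and Ua: "cond_util M P T Ua" and Up: "cond_util M P T Up"
    and hsol: "principal_sol M P T Ua Up c h"
    and maxim: "\<forall>t<T. beta t \<in> borel_measurable (Fil M P t)
                  \<and> in_incentive_set M P Ua c t (beta t) (A t) (Gam t)
                  \<and> (AE \<omega> in M. principal_obj P Ua Up c t (h (Suc t)) (A t) (Gam t) \<omega> = ereal (h t \<omega>))"
    and Theta_def: "\<And>\<omega>. Theta \<omega> =
             (\<Sum>t<T. Gam t \<omega> - real_of_ereal (Ua t (Gam t) \<omega>) + c t (A t \<omega>))"
    and ThetaS_def: "\<And>\<omega>. ThetaS \<omega> = R + Theta \<omega> - (\<Sum>t<T. beta t \<omega> * (A t \<omega> \<bullet> dPt P t \<omega>))"
  shows "is_contract M P T ThetaS beta
   \<and> incentive_compatible M P T Ua c ThetaS beta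
   \<and> (\<forall>H. agent_sol M P T Ua c ThetaS beta H \<longrightarrow>
          individually_rational M R H
        \<and> (AE \<omega> in M. H 0 \<omega> = R)
        \<and> agent_opt_effort M P T Ua c beta H A
        \<and> (AE \<omega> in M. Up 0 (\<lambda>\<omega>. wealth W0 P A T \<omega> - pay P T ThetaS beta A \<omega>) \<omega>
                        = ereal (W0 - R + h 0 \<omega>)))"
proof -
  have Am: "A t \<in> borel_measurable (Fil M P t)" if "t < T" for t
    using maxim that unfolding in_incentive_set_def by blast
  have Gm: "Gam t \<in> borel_measurable (Fil M P (Suc t))" if "t < T" for t
    using maxim that unfolding in_incentive_set_def by blast
  have GmT: "Gam t \<in> borel_measurable (Fil M P T)" if "t < T" for t
    using Fil_mono_meas[OF _ Gm[OF that]] that by simp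
  have betam: "beta t \<in> borel_measurable (Fil M P t)" if "t < T" for t
    using maxim that by blast
  have hm: "h t \<in> borel_measurable (Fil M P t)" if "t \<le> T" for t
    using hsol that unfolding principal_sol_def by blast
  have cm: "(\<lambda>\<omega>. c t (A t \<omega>)) \<in> borel_measurable (Fil M P t)" if "t < T" for t
    by (rule borel_measurable_continuous_on[OF conv_cont Am]) (use cost that in auto)
  have tm: "(\<lambda>\<omega>. a \<omega> \<bullet> dPt P s \<omega>) \<in> borel_measurable (Fil M P t)"
    if "a \<in> borel_measurable (Fil M P s)" "s < t" for a :: "'w \<Rightarrow> real^'n" and s t
    by (rule term_meas[OF that])
  have btm: "(\<lambda>\<omega>. beta s \<omega> * (a \<omega> \<bullet> dPt P s \<omega>)) \<in> borel_measurable (Fil M P t)"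
    if "a \<in> borel_measurable (Fil M P s)" "s < t" "t \<le> T" for a :: "'w \<Rightarrow> real^'n" and s t
  proof (rule borel_measurable_times)
    show "beta s \<in> borel_measurable (Fil M P t)"
      using Fil_mono_meas[OF _ betam[of s]] that by simp
    show "(\<lambda>\<omega>. a \<omega> \<bullet> dPt P s \<omega>) \<in> borel_measurable (Fil M P t)" by (rule tm[OF that(1,2)])
  qed
  define ru where "ru = (\<lambda>t \<omega>. real_of_ereal (Ua t (Gam t) \<omega>))"
  have rum: "ru t \<in> borel_measurable (Fil M P t)" if "t < T" for t
    unfolding ru_def by (rule borel_measurable_real_of_ereal, rule cu_meas[OF Ua _ GmT]) (use that in auto)
  define Qp where "Qp = (\<lambda>t \<omega>. h (Suc t) \<omega> + A t \<omega> \<bullet> dPt P t \<omega> - Gam t \<omega>)"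
  have Qpm: "Qp t \<in> borel_measurable (Fil M P T)" if "t < T" for t
  proof -
    have "h (Suc t) \<in> borel_measurable (Fil M P T)" using Fil_mono_meas[OF _ hm[of "Suc t"]] that by simp
    then show ?thesis unfolding Qp_def
      by (intro borel_measurable_add borel_measurable_diff tm Am GmT that) (use that in auto)
  qed
  have fin: "AE \<omega> in M. Ua t (Gam t) \<omega> = ereal (ru t \<omega>) \<and>
      Ua t (Gam t) \<omega> - ereal (c t (A t \<omega>)) + Up t (Qp t) \<omega> = ereal (h t \<omega>)" if "t < T" for t
  proof -
    have "AE \<omega> in M. principal_obj P Ua Up c t (h (Suc t)) (A t) (Gam t) \<omega> = ereal (h t \<omega>)"
      using maxim that by blast
    then have 1: "AE \<omega> in M. Ua t (Gam t) \<omega> - ereal (c t (A t \<omega>)) + Up t (Qp t) \<omega> = ereal (h t \<omega>)"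
      unfolding principal_obj_def Qp_def .
    have 2: "AE \<omega> in M. Ua t (Gam t) \<omega> \<noteq> \<infinity>" by (rule cu_fin[OF Ua _ GmT]) (use that in auto)
    have 3: "AE \<omega> in M. Up t (Qp t) \<omega> \<noteq> \<infinity>" by (rule cu_fin[OF Up _ Qpm]) (use that in auto)
    from 1 2 3 show ?thesis
    proof eventually_elim
      case (elim \<omega>)
      show ?case
      proof (cases "Ua t (Gam t) \<omega>")
        case (real r) then show ?thesis using elim by (simp add: ru_def)
      next
        case PInf then show ?thesis using elim by simp
      next
        case MInf then show ?thesis using elim by (cases "Up t (Qp t) \<omega>") auto
      qed
    qed
  qed
  define Hc where "Hc = (\<lambda>t \<omega>. R + (\<Sum>s<t. Gam s \<omega> - ru s \<omega> + c s (A s \<omega>) - beta s \<omega> * (A s \<omega> \<bullet> dPt P s \<omega>)))"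
  have Hcm: "Hc t \<in> borel_measurable (Fil M P t)" if "t \<le> T" for t
    unfolding Hc_def
  proof (intro borel_measurable_add borel_measurable_const borel_measurable_sum borel_measurable_diff)
    fix s assume "s \<in> {..<t}"
    then have st: "s < t" by simp
    show "Gam s \<in> borel_measurable (Fil M P t)" using Fil_mono_meas[OF _ Gm[of s]] st that by simp
    show "ru s \<in> borel_measurable (Fil M P t)" using Fil_mono_meas[OF _ rum[of s]] st that by simp
    show "(\<lambda>x. c s (A s x)) \<in> borel_measurable (Fil M P t)" using Fil_mono_meas[OF _ cm[of s]] st that by simp
    show "(\<lambda>x. beta s x * (A s x \<bullet> dPt P s x)) \<in> borel_measurable (Fil M P t)"
      by (rule btm[OF Am st that]) (use st that in simp)
  qed
  have HcT: "Hc T = ThetaS"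
    by (rule ext) (simp add: Hc_def ThetaS_def Theta_def ru_def sum_subtractf sum.distrib)
  have HcTm: "ThetaS \<in> borel_measurable (Fil M P T)" using Hcm[of T] HcT by simp
  have contr: "is_contract M P T ThetaS beta" unfolding is_contract_def using HcTm betam by blast
  have Hc0: "Hc 0 = (\<lambda>_. R)" by (rule ext) (simp add: Hc_def)
  have argm: "(\<lambda>\<omega>. F \<omega> + beta t \<omega> * (a \<omega> \<bullet> dPt P t \<omega>)) \<in> borel_measurable (Fil M P T)"
    if "t < T" "F \<in> borel_measurable (Fil M P (Suc t))" "a \<in> borel_measurable (Fil M P t)"
    for t F and a :: "'w \<Rightarrow> real^'n"
  proof (rule borel_measurable_add)
    show "F \<in> borel_measurable (Fil M P T)" using Fil_mono_meas[OF _ that(2)] that(1) by simp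
    show "(\<lambda>\<omega>. beta t \<omega> * (a \<omega> \<bullet> dPt P t \<omega>)) \<in> borel_measurable (Fil M P T)"
      by (rule btm[OF that(3)]) (use that in auto)
  qed
  have key: "AE \<omega> in M. agent_obj P Ua c t (Hc (Suc t)) (beta t) a \<omega> \<le> ereal (Hc t \<omega>)
      \<and> (a = A t \<longrightarrow> agent_obj P Ua c t (Hc (Suc t)) (beta t) a \<omega> = ereal (Hc t \<omega>))"
    if tT: "t < T" and am: "a \<in> borel_measurable (Fil M P t)" for t and a :: "'w \<Rightarrow> real^'n"
  proof -
    define G' where "G' = (\<lambda>\<omega>. Gam t \<omega> + beta t \<omega> * ((a \<omega> - A t \<omega>) \<bullet> dPt P t \<omega>))"
    define K where "K = (\<lambda>\<omega>. Hc t \<omega> - ru t \<omega> + c t (A t \<omega>))"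
    have feq: "(\<lambda>\<omega>. Hc (Suc t) \<omega> + beta t \<omega> * (a \<omega> \<bullet> dPt P t \<omega>)) = (\<lambda>\<omega>. G' \<omega> + K \<omega>)"
      by (rule ext) (simp add: Hc_def G'_def K_def inner_diff_left algebra_simps)
    have G'm: "G' \<in> borel_measurable (Fil M P T)" unfolding G'_def
      by (rule argm[OF tT Gm[OF tT]]) (intro borel_measurable_diff am Am tT)
    have Km: "K \<in> borel_measurable (Fil M P t)" unfolding K_def
      by (intro borel_measurable_add borel_measurable_diff Hcm rum cm tT) (use tT in simp)
    have tr: "AE \<omega> in M. Ua t (\<lambda>\<omega>. G' \<omega> + K \<omega>) \<omega> = Ua t G' \<omega> + ereal (K \<omega>)"
      by (rule cu_trans[OF Ua _ G'm Km]) (use tT in simp)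
    have inc: "AE \<omega> in M. Ua t (Gam t) \<omega> - ereal (c t (A t \<omega>)) \<ge> Ua t G' \<omega> - ereal (c t (a \<omega>))"
      using maxim tT am unfolding in_incentive_set_def G'_def by blast
    have G'A: "a = A t \<Longrightarrow> G' = Gam t" by (rule ext) (simp add: G'_def)
    from tr inc fin[OF tT] show ?thesis
    proof eventually_elim
      case (elim \<omega>)
      have ao: "agent_obj P Ua c t (Hc (Suc t)) (beta t) a \<omega> = Ua t G' \<omega> + ereal (K \<omega>) - ereal (c t (a \<omega>))"
        unfolding agent_obj_def feq elim(1) ..
      have "Ua t G' \<omega> + ereal (K \<omega>) - ereal (c t (a \<omega>)) \<le> ereal (Hc t \<omega>)"
        using elim(2,3) by (cases "Ua t G' \<omega>") (auto simp: K_def)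
      moreover have "a = A t \<longrightarrow> Ua t G' \<omega> + ereal (K \<omega>) - ereal (c t (a \<omega>)) = ereal (Hc t \<omega>)"
        using elim(3) G'A by (auto simp: K_def)
      ultimately show ?case unfolding ao by blast
    qed
  qed
  have Hcess: "is_esssup M (Fil M P t)
              {agent_obj P Ua c t (Hc (Suc t)) (beta t) a | a. a \<in> borel_measurable (Fil M P t)}
              (\<lambda>\<omega>. ereal (Hc t \<omega>))" if tT: "t < T" for t
    unfolding is_esssup_def
  proof (intro conjI ballI impI)
    show "(\<lambda>\<omega>. ereal (Hc t \<omega>)) \<in> borel_measurable (Fil M P t)"
      by (rule borel_measurable_ereal, rule Hcm) (use tT in simp)
    fix f assume "f \<in> {agent_obj P Ua c t (Hc (Suc t)) (beta t) a | a. a \<in> borel_measurable (Fil M P t)}"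
    then obtain a where f: "f = agent_obj P Ua c t (Hc (Suc t)) (beta t) a" and am: "a \<in> borel_measurable (Fil M P t)"
      by blast
    show "AE \<omega> in M. f \<omega> \<le> ereal (Hc t \<omega>)" using key[OF tT am] unfolding f by eventually_elim blast
  next
    fix Y assume Ym: "Y \<in> borel_measurable (Fil M P t)"
      and ub: "\<forall>f\<in>{agent_obj P Ua c t (Hc (Suc t)) (beta t) a | a. a \<in> borel_measurable (Fil M P t)}. AE \<omega> in M. f \<omega> \<le> Y \<omega>"
    have "AE \<omega> in M. agent_obj P Ua c t (Hc (Suc t)) (beta t) (A t) \<omega> \<le> Y \<omega>"
      using ub Am[OF tT] by blast
    with key[OF tT Am[OF tT]] show "AE \<omega> in M. ereal (Hc t \<omega>) \<le> Y \<omega>" by eventually_elim simp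
  qed
  have Hcsol: "agent_sol M P T Ua c ThetaS beta Hc"
    unfolding agent_sol_def using Hcm Hcess HcT by auto
  have Hcopt: "agent_opt_effort M P T Ua c beta Hc A"
    unfolding agent_opt_effort_def
  proof (intro allI impI conjI)
    fix t assume tT: "t < T"
    show "A t \<in> borel_measurable (Fil M P t)" by (rule Am[OF tT])
    show "AE \<omega> in M. agent_obj P Ua c t (Hc (Suc t)) (beta t) (A t) \<omega> = ereal (Hc t \<omega>)"
      using key[OF tT Am[OF tT]] by eventually_elim simp
  qed
  have IC: "incentive_compatible M P T Ua c ThetaS beta"
    unfolding incentive_compatible_def using Hcsol Hcopt by blast
  have uniq: "AE \<omega> in M. H t \<omega> = Hc t \<omega>" if Hs: "agent_sol M P T Ua c ThetaS beta H" and tT: "t \<le> T" for H t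
    using tT
  proof (induction rule: inc_induct)
    case base
    have "AE \<omega> in M. H T \<omega> = ThetaS \<omega>" using Hs unfolding agent_sol_def by blast
    then show ?case using HcT by simp
  next
    case (step n)
    have HmS: "H (Suc n) \<in> borel_measurable (Fil M P (Suc n))" using Hs step unfolding agent_sol_def by auto
    have Hmn: "H n \<in> borel_measurable (Fil M P n)" using Hs step unfolding agent_sol_def by auto
    have essH: "is_esssup M (Fil M P n)
              {agent_obj P Ua c n (H (Suc n)) (beta n) a | a. a \<in> borel_measurable (Fil M P n)}
              (\<lambda>\<omega>. ereal (H n \<omega>))" using Hs step unfolding agent_sol_def by auto
    have same: "AE \<omega> in M. agent_obj P Ua c n (H (Suc n)) (beta n) a \<omega> = agent_obj P Ua c n (Hc (Suc n)) (beta n) a \<omega>"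
      if am: "a \<in> borel_measurable (Fil M P n)" for a :: "'w \<Rightarrow> real^'n"
    proof -
      have "AE \<omega> in M. Ua n (\<lambda>\<omega>. H (Suc n) \<omega> + beta n \<omega> * (a \<omega> \<bullet> dPt P n \<omega>)) \<omega>
          = Ua n (\<lambda>\<omega>. Hc (Suc n) \<omega> + beta n \<omega> * (a \<omega> \<bullet> dPt P n \<omega>)) \<omega>"
        by (rule cu_cong[OF Ua _ argm[OF step(2) HmS am] argm[OF step(2) Hcm am]])
           (use step in \<open>auto elim: AE_mp\<close>)
      then show ?thesis unfolding agent_obj_def by eventually_elim simp
    qed
    have le1: "AE \<omega> in M. ereal (H n \<omega>) \<le> ereal (Hc n \<omega>)"
    proof (rule esssup_le[OF essH])
      show "(\<lambda>\<omega>. ereal (Hc n \<omega>)) \<in> borel_measurable (Fil M P n)"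
        by (rule borel_measurable_ereal, rule Hcm) (use step in simp)
      fix f assume "f \<in> {agent_obj P Ua c n (H (Suc n)) (beta n) a | a. a \<in> borel_measurable (Fil M P n)}"
      then obtain a where f: "f = agent_obj P Ua c n (H (Suc n)) (beta n) a" and am: "a \<in> borel_measurable (Fil M P n)"
        by blast
      have "agent_obj P Ua c n (Hc (Suc n)) (beta n) a \<in>
          {agent_obj P Ua c n (Hc (Suc n)) (beta n) a | a. a \<in> borel_measurable (Fil M P n)}" using am by blast
      from esssup_ub[OF Hcess[OF step(2)] this] same[OF am]
      show "AE \<omega> in M. f \<omega> \<le> ereal (Hc n \<omega>)" unfolding f by eventually_elim simp
    qed
    have le2: "AE \<omega> in M. ereal (Hc n \<omega>) \<le> ereal (H n \<omega>)"
    proof (rule esssup_le[OF Hcess[OF step(2)]])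
      show "(\<lambda>\<omega>. ereal (H n \<omega>)) \<in> borel_measurable (Fil M P n)"
        by (rule borel_measurable_ereal, rule Hmn)
      fix f assume "f \<in> {agent_obj P Ua c n (Hc (Suc n)) (beta n) a | a. a \<in> borel_measurable (Fil M P n)}"
      then obtain a where f: "f = agent_obj P Ua c n (Hc (Suc n)) (beta n) a" and am: "a \<in> borel_measurable (Fil M P n)"
        by blast
      have "agent_obj P Ua c n (H (Suc n)) (beta n) a \<in>
          {agent_obj P Ua c n (H (Suc n)) (beta n) a | a. a \<in> borel_measurable (Fil M P n)}" using am by blast
      from esssup_ub[OF essH this] same[OF am]
      show "AE \<omega> in M. f \<omega> \<le> ereal (H n \<omega>)" unfolding f by eventually_elim simp
    qed
    from le1 le2 show ?case by eventually_elim simp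
  qed
  define X where "X = (\<lambda>\<omega>. wealth W0 P A T \<omega> - pay P T ThetaS beta A \<omega>)"
  define V where "V = (\<lambda>t \<omega>. W0 - R + (\<Sum>s<t. A s \<omega> \<bullet> dPt P s \<omega> - Gam s \<omega> + ru s \<omega> - c s (A s \<omega>)) + h t \<omega>)"
  have Xm: "X \<in> borel_measurable (Fil M P T)" unfolding X_def wealth_def pay_def
  proof (intro borel_measurable_add borel_measurable_const borel_measurable_sum borel_measurable_diff HcTm)
    fix s assume "s \<in> {..<T}"
    then have sT: "s < T" by simp
    show "(\<lambda>x. A s x \<bullet> dPt P s x) \<in> borel_measurable (Fil M P T)" by (rule tm[OF Am[OF sT] sT])
    show "(\<lambda>x. beta s x * (A s x \<bullet> dPt P s x)) \<in> borel_measurable (Fil M P T)" by (rule btm[OF Am[OF sT] sT]) simp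
  qed
  have Vm: "V t \<in> borel_measurable (Fil M P t)" if "t \<le> T" for t
    unfolding V_def
  proof (intro borel_measurable_add borel_measurable_const borel_measurable_sum borel_measurable_diff hm that)
    fix s assume "s \<in> {..<t}"
    then have st: "s < t" by simp
    show "Gam s \<in> borel_measurable (Fil M P t)" using Fil_mono_meas[OF _ Gm[of s]] st that by simp
    show "ru s \<in> borel_measurable (Fil M P t)" using Fil_mono_meas[OF _ rum[of s]] st that by simp
    show "(\<lambda>x. c s (A s x)) \<in> borel_measurable (Fil M P t)" using Fil_mono_meas[OF _ cm[of s]] st that by simp
    show "(\<lambda>x. A s x \<bullet> dPt P s x) \<in> borel_measurable (Fil M P t)"
      by (rule tm[OF Am st]) (use st that in simp)
  qed
  have claim: "AE \<omega> in M. Up t X \<omega> = ereal (V t \<omega>)" if "t \<le> T" for t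
    using that
  proof (induction rule: inc_induct)
    case base
    have "AE \<omega> in M. Up T X \<omega> = ereal (X \<omega>)" by (rule cu_self[OF Up order_refl Xm])
    moreover have "AE \<omega> in M. h T \<omega> = 0" using hsol unfolding principal_sol_def by blast
    ultimately show ?case by eventually_elim
      (simp add: X_def V_def wealth_def pay_def ThetaS_def Theta_def ru_def sum_subtractf sum.distrib)
  next
    case (step n)
    have VmS: "V (Suc n) \<in> borel_measurable (Fil M P (Suc n))" using Vm step by simp
    have VmT: "V (Suc n) \<in> borel_measurable (Fil M P T)" using Fil_mono_meas[OF _ VmS] step by simp
    have "AE \<omega> in M. Up (Suc n) (V (Suc n)) \<omega> = ereal (V (Suc n) \<omega>)" by (rule cu_self[OF Up _ VmS]) (use step in simp)
    with step.IH have e: "AE \<omega> in M. Up (Suc n) X \<omega> = Up (Suc n) (V (Suc n)) \<omega>" by eventually_elim simp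
    have a1: "AE \<omega> in M. Up n X \<omega> \<le> Up n (V (Suc n)) \<omega>"
      by (rule cu_tc[OF Up step(2) Xm VmT]) (use e in \<open>auto elim: AE_mp\<close>)
    have a2: "AE \<omega> in M. Up n (V (Suc n)) \<omega> \<le> Up n X \<omega>"
      by (rule cu_tc[OF Up step(2) VmT Xm]) (use e in \<open>auto elim: AE_mp\<close>)
    define K where "K = (\<lambda>\<omega>. W0 - R + (\<Sum>s<n. A s \<omega> \<bullet> dPt P s \<omega> - Gam s \<omega> + ru s \<omega> - c s (A s \<omega>)) + ru n \<omega> - c n (A n \<omega>))"
    have Km: "K \<in> borel_measurable (Fil M P n)"
    proof -
      have "(\<lambda>\<omega>. V n \<omega> - h n \<omega> + ru n \<omega> - c n (A n \<omega>)) \<in> borel_measurable (Fil M P n)"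
        by (intro borel_measurable_add borel_measurable_diff Vm hm rum cm step(2)) (use step in simp)+
      moreover have "(\<lambda>\<omega>. V n \<omega> - h n \<omega> + ru n \<omega> - c n (A n \<omega>)) = K"
        by (rule ext) (simp add: V_def K_def)
      ultimately show ?thesis by simp
    qed
    have Veq: "V (Suc n) = (\<lambda>\<omega>. Qp n \<omega> + K \<omega>)" by (rule ext) (simp add: V_def Qp_def K_def algebra_simps)
    have tr: "AE \<omega> in M. Up n (V (Suc n)) \<omega> = Up n (Qp n) \<omega> + ereal (K \<omega>)"
      unfolding Veq by (rule cu_trans[OF Up _ Qpm[OF step(2)] Km]) (use step in simp)
    from a1 a2 tr fin[OF step(2)] show ?case
    proof eventually_elim
      case (elim \<omega>)
      have "Up n (Qp n) \<omega> + ereal (K \<omega>) = ereal (V n \<omega>)"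
        using elim(4) by (cases "Up n (Qp n) \<omega>") (auto simp: K_def V_def)
      then show ?case using elim(1,2,3) by simp
    qed
  qed
  have final: "AE \<omega> in M. Up 0 X \<omega> = ereal (W0 - R + h 0 \<omega>)"
    using claim[of 0, OF le0] by eventually_elim (simp add: V_def)
  show ?thesis
  proof (intro conjI allI impI contr IC)
    fix H assume Hs: "agent_sol M P T Ua c ThetaS beta H"
    have u0: "AE \<omega> in M. H 0 \<omega> = R" using uniq[OF Hs le0] Hc0 by simp
    then show "AE \<omega> in M. H 0 \<omega> = R" .
    show "individually_rational M R H" unfolding individually_rational_def using u0 by eventually_elim simp
    show "agent_opt_effort M P T Ua c beta H A"
      unfolding agent_opt_effort_def
    proof (intro allI impI conjI)
      fix t assume tT: "t < T"
      show "A t \<in> borel_measurable (Fil M P t)" by (rule Am[OF tT])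
      have HmS: "H (Suc t) \<in> borel_measurable (Fil M P (Suc t))" using Hs tT unfolding agent_sol_def by auto
      have "AE \<omega> in M. Ua t (\<lambda>\<omega>. H (Suc t) \<omega> + beta t \<omega> * (A t \<omega> \<bullet> dPt P t \<omega>)) \<omega>
          = Ua t (\<lambda>\<omega>. Hc (Suc t) \<omega> + beta t \<omega> * (A t \<omega> \<bullet> dPt P t \<omega>)) \<omega>"
        by (rule cu_cong[OF Ua _ argm[OF tT HmS Am[OF tT]] argm[OF tT Hcm Am[OF tT]]])
           (use tT uniq[OF Hs, of "Suc t"] in \<open>auto elim: AE_mp\<close>)
      moreover have "AE \<omega> in M. agent_obj P Ua c t (Hc (Suc t)) (beta t) (A t) \<omega> = ereal (Hc t \<omega>)"
        using key[OF tT Am[OF tT]] by eventually_elim simp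
      moreover have "AE \<omega> in M. H t \<omega> = Hc t \<omega>" using uniq[OF Hs] tT by simp
      ultimately show "AE \<omega> in M. agent_obj P Ua c t (H (Suc t)) (beta t) (A t) \<omega> = ereal (H t \<omega>)"
        unfolding agent_obj_def by eventually_elim simp
    qed
    show "AE \<omega> in M. Up 0 (\<lambda>\<omega>. wealth W0 P A T \<omega> - pay P T ThetaS beta A \<omega>) \<omega> = ereal (W0 - R + h 0 \<omega>)"
      using final unfolding X_def .
  qed
qed


theorem mainTheorem2:
  fixes M :: "'w measure" and P :: "nat \<Rightarrow> 'w \<Rightarrow> real^'n" and T :: nat
    and W0 R :: real and c :: "nat \<Rightarrow> real^'n \<Rightarrow> real"
    and Ua Up :: "nat \<Rightarrow> ('w \<Rightarrow> real) \<Rightarrow> 'w \<Rightarrow> ereal"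
    and h :: "nat \<Rightarrow> 'w \<Rightarrow> real"
    and beta :: "nat \<Rightarrow> 'w \<Rightarrow> real" and A :: "nat \<Rightarrow> 'w \<Rightarrow> real^'n"
    and Gam :: "nat \<Rightarrow> 'w \<Rightarrow> real"
    and Theta ThetaS :: "'w \<Rightarrow> real"
  assumes prob: "prob_space M"
    and P_meas: "\<forall>t\<le>T. P t \<in> borel_measurable M"
    and P_pos: "\<forall>t\<le>T. AE \<omega> in M. \<forall>i. 0 < P t \<omega> $ i"
    and P_ce: "\<forall>t<T. \<forall>i. AE \<omega> in M.
                 nn_cond_exp M (Fil M P t) (\<lambda>\<omega>. ennreal (P (Suc t) \<omega> $ i)) \<omega> < \<infinity>"
    and cost: "\<forall>t<T. strictly_convex (c t)"
    and Ua: "cond_util M P T Ua" and Up: "cond_util M P T Up"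
    and hsol: "principal_sol M P T Ua Up c h"
    and maxim: "\<forall>t<T. beta t \<in> borel_measurable (Fil M P t)
                  \<and> in_incentive_set M P Ua c t (beta t) (A t) (Gam t)
                  \<and> (AE \<omega> in M. principal_obj P Ua Up c t (h (Suc t)) (A t) (Gam t) \<omega> = ereal (h t \<omega>))"
    and Theta_def: "\<And>\<omega>. Theta \<omega> =
             (\<Sum>t<T. Gam t \<omega> - real_of_ereal (Ua t (Gam t) \<omega>) + c t (A t \<omega>))"
    and ThetaS_def: "\<And>\<omega>. ThetaS \<omega> = R + Theta \<omega> - (\<Sum>t<T. beta t \<omega> * (A t \<omega> \<bullet> dPt P t \<omega>))"
  shows
    "(\<forall>Th b H A'. is_contract M P T Th b \<and> agent_sol M P T Ua c Th b H
          \<and> agent_opt_effort M P T Ua c b H A' \<and> individually_rational M R H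
        \<longrightarrow> (AE \<omega> in M. Up 0 (\<lambda>\<omega>. wealth W0 P A' T \<omega> - pay P T Th b A' \<omega>) \<omega>
                          \<le> ereal (W0 - R + h 0 \<omega>)))
   \<and> (\<forall>A' \<omega>. pay P T ThetaS beta A' \<omega>
          = R + Theta \<omega> + (\<Sum>t<T. beta t \<omega> * (A' t \<omega> \<bullet> dPt P t \<omega> - A t \<omega> \<bullet> dPt P t \<omega>)))
   \<and> is_contract M P T ThetaS beta
   \<and> incentive_compatible M P T Ua c ThetaS beta
   \<and> (\<forall>H. agent_sol M P T Ua c ThetaS beta H \<longrightarrow>
          individually_rational M R H
        \<and> (AE \<omega> in M. H 0 \<omega> = R)
        \<and> agent_opt_effort M P T Ua c beta H A
        \<and> (AE \<omega> in M. Up 0 (\<lambda>\<omega>. wealth W0 P A T \<omega> - pay P T ThetaS beta A \<omega>) \<omega>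
                        = ereal (W0 - R + h 0 \<omega>)))"
  proof -
  have P1: "\<forall>Th b H A'. is_contract M P T Th b \<and> agent_sol M P T Ua c Th b H
          \<and> agent_opt_effort M P T Ua c b H A' \<and> individually_rational M R H
        \<longrightarrow> (AE \<omega> in M. Up 0 (\<lambda>\<omega>. wealth W0 P A' T \<omega> - pay P T Th b A' \<omega>) \<omega>
                          \<le> ereal (W0 - R + h 0 \<omega>))"
    using part1[OF Up hsol] by blast
  have P2: "\<forall>A' \<omega>. pay P T ThetaS beta A' \<omega>
          = R + Theta \<omega> + (\<Sum>t<T. beta t \<omega> * (A' t \<omega> \<bullet> dPt P t \<omega> - A t \<omega> \<bullet> dPt P t \<omega>))"
    by (simp add: pay_def ThetaS_def right_diff_distrib sum_subtractf)
  show ?thesis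
    using P1 P2 part2[OF cost Ua Up hsol maxim Theta_def ThetaS_def, of W0] by blast
qed

end
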